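(* Let $b\ge1$ be an integer not of the form $2^r$ or $3\cdot 2^r$ ($r\ge0$ an integer), and let $n=2b+3$. Then the codewords $|\bar0\rangle=\tfrac{1}{\sqrt{4b}}\big(\sqrt{4b-n}\,|D^n_0\rangle+\sqrt{n}\,|D^n_{2b}\rangle\big)$, $|\bar1\rangle=\tfrac{1}{\sqrt{4b}}\big(\sqrt{n}\,|D^n_3\rangle+\sqrt{4b-n}\,|D^n_n\rangle\big)$ span a non-additive permutationally invariant $((2b+3,2,3))$ $n$-qubit code with exotic transversal gates.
   Context: $|D^n_w\rangle$ denotes the $n$-qubit Dicke state: the normalized uniform superposition of all computational basis states of Hamming weight $w$. An $((n,K,d))$ code is a $K$-dimensional subspace of $n$ qubits such that for all codewords $|\phi\rangle,|\psi\rangle$ and every Pauli operator $E$ of weight $<d$, $\langle\phi|E|\psi\rangle=c_E\langle\phi|\psi\rangle$ with $c_E$ independent of the codewords. Non-additive means not a stabilizer code (a stabilizer code being the joint $+1$ eigenspace of an abelian subgroup of the Pauli group not containing $-I$). Permutationally invariant: every codeword is invariant under all qubit permutations. The (special) single-qubit Clifford hierarchy is defined by $\mathsf{C}^{(1)}=\langle\mathsf{X},\mathsf{Z}\rangle$ with $\mathsf{X}=\begin{pmatrix}0&-i\\-i&0\end{pmatrix}$, $\mathsf{Z}=\mathrm{diag}(-i,i)$, and $\mathsf{C}^{(r)}=\{\mathsf{U}\in\mathrm{SU}(2):\mathsf{U}\mathsf{C}^{(1)}\mathsf{U}^\dagger\subset\mathsf{C}^{(r-1)}\}$; a gate in $\mathrm{SU}(2)$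 is exotic if it lies in no $\mathsf{C}^{(r)}$. "Exotic transversal gates" means there is an exotic $g\in\mathrm{SU}(2)$ such that $g^{\otimes n}$ preserves the code and acts as a logical gate on it. *)

theory Defs
  imports Complex_Main
begin

text \<open>An n-qubit state is a function from basis indices to amplitudes; basis index i < 2^n
  encodes the computational basis state whose k-th qubit (k < n) is bit k of i.
  Amplitudes at indices >= 2^n are required to be 0.  Operators are functions
  nat => nat => complex, zero outside the square [0,2^n) x [0,2^n).\<close>

type_synonym qstate = "nat \<Rightarrow> complex"
type_synonym qop = "nat \<Rightarrow> nat \<Rightarrow> complex"

definition qvecs :: "nat \<Rightarrow> qstate set" where
  "qvecs n = {v. \<forall>i. 2 ^ n \<le> i \<longrightarrow> v i = 0}"

definition hweight :: "nat \<Rightarrow> nat \<Rightarrow> nat" where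
  "hweight n i = card {k. k < n \<and> bit i k}"

definition dicke :: "nat \<Rightarrow> nat \<Rightarrow> qstate" where
  "dicke n w = (\<lambda>i. if i < 2 ^ n \<and> hweight n i = w
                      then complex_of_real (1 / sqrt (real (n choose w))) else 0)"

definition qinner :: "nat \<Rightarrow> qstate \<Rightarrow> qstate \<Rightarrow> complex" where
  "qinner n u v = (\<Sum>i<2 ^ n. cnj (u i) * v i)"

definition qapply :: "nat \<Rightarrow> qop \<Rightarrow> qstate \<Rightarrow> qstate" where
  "qapply n A v = (\<lambda>i. if i < 2 ^ n then (\<Sum>j<2 ^ n. A i j * v j) else 0)"

definition qmult :: "nat \<Rightarrow> qop \<Rightarrow> qop \<Rightarrow> qop" where
  "qmult n A B = (\<lambda>i j. if i < 2 ^ n \<and> j < 2 ^ n then (\<Sum>k<2 ^ n. A i k * B k j) else 0)"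

definition qid :: "nat \<Rightarrow> qop" where
  "qid n = (\<lambda>i j. if i < 2 ^ n \<and> j < 2 ^ n \<and> i = j then 1 else 0)"

definition qscale :: "complex \<Rightarrow> qop \<Rightarrow> qop" where
  "qscale c A = (\<lambda>i j. c * A i j)"

datatype pauli = PI | PX | PY | PZ

text \<open>Matrix entries of single-qubit Paulis; index False = |0>, True = |1>.\<close>
fun pauli_entry :: "pauli \<Rightarrow> bool \<Rightarrow> bool \<Rightarrow> complex" where
  "pauli_entry PI a c = (if a = c then 1 else 0)"
| "pauli_entry PX a c = (if a \<noteq> c then 1 else 0)"
| "pauli_entry PY a c = (if a \<noteq> c then (if a then \<i> else - \<i>) else 0)"
| "pauli_entry PZ a c = (if a = c then (if a then -1 else 1) else 0)"

definition pauli_op :: "nat \<Rightarrow> pauli list \<Rightarrow> qop" where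
  "pauli_op n ps = (\<lambda>i j. if i < 2 ^ n \<and> j < 2 ^ n
                          then (\<Prod>k<n. pauli_entry (ps ! k) (bit i k) (bit j k)) else 0)"

definition pauli_weight :: "pauli list \<Rightarrow> nat" where
  "pauli_weight ps = length (filter (\<lambda>p. p \<noteq> PI) ps)"

definition pauli_group :: "nat \<Rightarrow> qop set" where
  "pauli_group n = {qscale (\<i> ^ m) (pauli_op n ps) | m ps. length ps = n}"

definition qecc_distance :: "nat \<Rightarrow> qstate set \<Rightarrow> nat \<Rightarrow> bool" where
  "qecc_distance n C d \<longleftrightarrow>
     (\<forall>ps. length ps = n \<and> pauli_weight ps < d \<longrightarrow>
        (\<exists>c. \<forall>\<phi>\<in>C. \<forall>\<psi>\<in>C. qinner n \<phi> (qapply n (pauli_op n ps) \<psi>) = c * qinner n \<phi> \<psi>))"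

definition span2 :: "qstate \<Rightarrow> qstate \<Rightarrow> qstate set" where
  "span2 u v = {w. \<exists>\<alpha> \<beta>. w = (\<lambda>i. \<alpha> * u i + \<beta> * v i)}"

definition lin_indep2 :: "qstate \<Rightarrow> qstate \<Rightarrow> bool" where
  "lin_indep2 u v \<longleftrightarrow> (\<forall>\<alpha> \<beta>. (\<lambda>i. \<alpha> * u i + \<beta> * v i) = (\<lambda>i. 0) \<longrightarrow> \<alpha> = 0 \<and> \<beta> = 0)"

definition is_code_n2d :: "nat \<Rightarrow> nat \<Rightarrow> qstate \<Rightarrow> qstate \<Rightarrow> bool" where
  "is_code_n2d n d u v \<longleftrightarrow> u \<in> qvecs n \<and> v \<in> qvecs n \<and> lin_indep2 u v
                          \<and> qecc_distance n (span2 u v) d"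

text \<open>Stabilizer codes: joint +1 eigenspace of an abelian subgroup S of the Pauli group
  with -I not in S.  (S is finite, so a nonempty subset closed under products is a subgroup.)\<close>
definition abelian_pauli_subgroup :: "nat \<Rightarrow> qop set \<Rightarrow> bool" where
  "abelian_pauli_subgroup n S \<longleftrightarrow>
     S \<subseteq> pauli_group n \<and> qid n \<in> S \<and>
     (\<forall>A\<in>S. \<forall>B\<in>S. qmult n A B \<in> S) \<and>
     (\<forall>A\<in>S. \<forall>B\<in>S. qmult n A B = qmult n B A)"

definition stabilizer_space :: "nat \<Rightarrow> qop set \<Rightarrow> qstate set" where
  "stabilizer_space n S = {v \<in> qvecs n. \<forall>A\<in>S. qapply n A v = v}"

definition is_stabilizer_code :: "nat \<Rightarrow> qstate set \<Rightarrow> bool" where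
  "is_stabilizer_code n C \<longleftrightarrow>
     (\<exists>S. abelian_pauli_subgroup n S \<and> qscale (-1) (qid n) \<notin> S \<and> C = stabilizer_space n S)"

definition non_additive :: "nat \<Rightarrow> qstate set \<Rightarrow> bool" where
  "non_additive n C \<longleftrightarrow> \<not> is_stabilizer_code n C"

text \<open>Qubit permutation sigma acting on basis index i: qubit k moves to position sigma k.\<close>
definition perm_index :: "nat \<Rightarrow> (nat \<Rightarrow> nat) \<Rightarrow> nat \<Rightarrow> nat" where
  "perm_index n \<sigma> i = (\<Sum>k<n. if bit i k then 2 ^ (\<sigma> k) else 0)"

definition perm_invariant :: "nat \<Rightarrow> qstate set \<Rightarrow> bool" where
  "perm_invariant n C \<longleftrightarrow>
     (\<forall>\<sigma>. bij_betw \<sigma> {..<n} {..<n} \<longrightarrow>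
        (\<forall>v\<in>C. \<forall>i<2 ^ n. v (perm_index n \<sigma> i) = v i))"

type_synonym mat2 = "bool \<Rightarrow> bool \<Rightarrow> complex"

definition m2mult :: "mat2 \<Rightarrow> mat2 \<Rightarrow> mat2" where
  "m2mult A B = (\<lambda>a c. A a False * B False c + A a True * B True c)"

definition m2adj :: "mat2 \<Rightarrow> mat2" where
  "m2adj A = (\<lambda>a c. cnj (A c a))"

definition m2id :: mat2 where
  "m2id = (\<lambda>a c. if a = c then 1 else 0)"

definition m2det :: "mat2 \<Rightarrow> complex" where
  "m2det A = A False False * A True True - A False True * A True False"

definition SU2 :: "mat2 set" where
  "SU2 = {U. m2mult U (m2adj U) = m2id \<and> m2det U = 1}"

definition sX :: mat2 where
  "sX = (\<lambda>a c. if a \<noteq> c then - \<i> else 0)"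

definition sZ :: mat2 where
  "sZ = (\<lambda>a c. if a = c then (if a then \<i> else - \<i>) else 0)"

text \<open>C^(1) = group generated by X and Z (finite, so the monoid closure is the group).\<close>
inductive_set cliff1 :: "mat2 set" where
  one: "m2id \<in> cliff1"
| genX: "sX \<in> cliff1"
| genZ: "sZ \<in> cliff1"
| mult: "A \<in> cliff1 \<Longrightarrow> B \<in> cliff1 \<Longrightarrow> m2mult A B \<in> cliff1"

text \<open>cliff r = C^(r) for r >= 1 (cliff 0 is unused).\<close>
fun cliff :: "nat \<Rightarrow> mat2 set" where
  "cliff 0 = {}"
| "cliff (Suc 0) = cliff1"
| "cliff (Suc (Suc r)) =
     {U \<in> SU2. \<forall>P\<in>cliff1. m2mult (m2mult U P) (m2adj U) \<in> cliff (Suc r)}"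

definition exotic :: "mat2 \<Rightarrow> bool" where
  "exotic g \<longleftrightarrow> g \<in> SU2 \<and> (\<forall>r\<ge>1. g \<notin> cliff r)"

definition tensor_power :: "nat \<Rightarrow> mat2 \<Rightarrow> qop" where
  "tensor_power n g = (\<lambda>i j. if i < 2 ^ n \<and> j < 2 ^ n
                              then (\<Prod>k<n. g (bit i k) (bit j k)) else 0)"

text \<open>g^{(x)n} preserves the code (being unitary, it then acts as a logical gate).\<close>
definition has_exotic_transversal :: "nat \<Rightarrow> qstate set \<Rightarrow> bool" where
  "has_exotic_transversal n C \<longleftrightarrow>
     (\<exists>g. exotic g \<and> (\<forall>v\<in>C. qapply n (tensor_power n g) v \<in> C))"

definition codeword0 :: "nat \<Rightarrow> qstate" where
  "codeword0 b = (let n = 2 * b + 3 in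
     (\<lambda>i. complex_of_real (1 / sqrt (real (4 * b))) *
          (complex_of_real (sqrt (real (4 * b) - real n)) * dicke n 0 i
           + complex_of_real (sqrt (real n)) * dicke n (2 * b) i)))"

definition codeword1 :: "nat \<Rightarrow> qstate" where
  "codeword1 b = (let n = 2 * b + 3 in
     (\<lambda>i. complex_of_real (1 / sqrt (real (4 * b))) *
          (complex_of_real (sqrt (real n)) * dicke n 3 i
           + complex_of_real (sqrt (real (4 * b) - real n)) * dicke n n i)))"

end

theory Submission
  imports Defs "HOL-Computational_Algebra.Primes"
begin
unbundle bit_operations_syntax



definition setof :: "nat \<Rightarrow> nat \<Rightarrow> nat set" where
  "setof n i = {k. k < n \<and> bit i k}"

definition num :: "nat set \<Rightarrow> nat" where
  "num A = (\<Sum>k\<in>A. 2 ^ k)"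

lemma bit_num: "finite A \<Longrightarrow> bit (num A) j \<longleftrightarrow> j \<in> A"
proof (induction A arbitrary: j rule: finite_induct)
  case empty then show ?case by (simp add: num_def)
next
  case (insert x A)
  have "num (insert x A) = 2 ^ x + num A" using insert by (simp add: num_def)
  also have "\<dots> = 2 ^ x OR num A"
    by (rule disjunctive_add) (use insert in \<open>auto simp: bit_exp_iff\<close>)
  finally show ?case using insert by (auto simp: bit_or_iff bit_exp_iff)
qed

lemma less_exp_iff_bits: "(x::nat) < 2 ^ n \<longleftrightarrow> (\<forall>k. bit x k \<longrightarrow> k < n)"
proof
  assume "x < 2 ^ n"
  then have "take_bit n x = x" by (simp add: take_bit_nat_eq_self_iff)
  then show "\<forall>k. bit x k \<longrightarrow> k < n" by (metis bit_take_bit_iff)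
next
  assume h: "\<forall>k. bit x k \<longrightarrow> k < n"
  have "take_bit n x = x" by (rule bit_eqI) (use h in \<open>auto simp: bit_take_bit_iff\<close>)
  then show "x < 2 ^ n" by (simp add: take_bit_nat_eq_self_iff)
qed

lemma num_less: "A \<subseteq> {..<n} \<Longrightarrow> num A < 2 ^ n"
  using bit_num[of A] finite_subset[of A "{..<n}"] by (auto simp: less_exp_iff_bits)

lemma setof_num: "A \<subseteq> {..<n} \<Longrightarrow> setof n (num A) = A"
  using bit_num[of A] finite_subset[of A "{..<n}"] by (auto simp: setof_def)

lemma num_setof: "i < 2 ^ n \<Longrightarrow> num (setof n i) = i"
  by (rule bit_eqI) (auto simp: bit_num setof_def less_exp_iff_bits)

lemma setof_sub: "setof n i \<subseteq> {..<n}" by (auto simp: setof_def)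

lemma hweight_setof: "hweight n i = card (setof n i)"
  by (simp add: hweight_def setof_def)

lemma bij_setof: "bij_betw (setof n) {..<2^n} (Pow {..<n})"
  apply (rule bij_betw_byWitness[where f'=num])
  using num_setof setof_num num_less by (auto simp: setof_def)

lemma xor_less: "(i::nat) < 2 ^ n \<Longrightarrow> m < 2 ^ n \<Longrightarrow> i XOR m < 2 ^ n"
  by (auto simp: less_exp_iff_bits bit_xor_iff)

lemma setof_xor: "setof n (i XOR m) = (setof n i - setof n m) \<union> (setof n m - setof n i)"
  by (auto simp: setof_def bit_xor_iff)

lemma sum_xor_reindex:
  assumes "(m::nat) < 2 ^ n"
  shows "(\<Sum>i<2^n. f (i XOR m)) = (\<Sum>i<2^n. (f i :: 'a::comm_monoid_add))"
  by (rule sum.reindex_bij_witness[where i="\<lambda>i. i XOR m" and j="\<lambda>i. i XOR m"])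
     (use assms in \<open>auto simp: xor_less xor.assoc\<close>)

lemma card_weight: "card {i. i < 2 ^ n \<and> hweight n i = w} = n choose w"
proof -
  have "card {i. i < 2 ^ n \<and> hweight n i = w} = card (setof n ` {i. i < 2 ^ n \<and> hweight n i = w})"
    by (rule card_image[symmetric], rule inj_on_subset[OF bij_betw_imp_inj_on[OF bij_setof]]) auto
  also have "setof n ` {i. i < 2 ^ n \<and> hweight n i = w} = {B. B \<subseteq> {..<n} \<and> card B = w}"
    using setof_sub num_less setof_num by (auto simp: hweight_setof image_iff) (metis)
  also have "card \<dots> = n choose w" by (simp add: n_subsets)
  finally show ?thesis .
qed




lemma card_weight_bit:
  assumes "p < n" "w \<ge> 1"
  shows "card {i. i < 2 ^ n \<and> hweight n i = w \<and> bit i p} = (n - 1) choose (w - 1)"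
proof -
  have "card {i. i < 2 ^ n \<and> hweight n i = w \<and> bit i p} = card (setof n ` {i. i < 2 ^ n \<and> hweight n i = w \<and> bit i p})"
    by (rule card_image[symmetric], rule inj_on_subset[OF bij_betw_imp_inj_on[OF bij_setof]]) auto
  also have "setof n ` {i. i < 2 ^ n \<and> hweight n i = w \<and> bit i p} = {B. B \<subseteq> {..<n} \<and> card B = w \<and> p \<in> B}"
  proof -
    have "B \<in> setof n ` {i. i < 2 ^ n \<and> hweight n i = w \<and> bit i p}" if "B \<subseteq> {..<n}" "card B = w" "p \<in> B" for B
    proof -
      have "setof n (num B) = B" using setof_num that by blast
      then show ?thesis using that num_less[of B n]
        by (auto simp: hweight_setof image_iff setof_def intro!: exI[of _ "num B"])
    qed
    then show ?thesis using setof_sub by (auto simp: hweight_setof setof_def assms)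
  qed
  also have "card {B. B \<subseteq> {..<n} \<and> card B = w \<and> p \<in> B} = card {C. C \<subseteq> {..<n} - {p} \<and> card C = w - 1}"
  proof (rule bij_betw_same_card[where f="\<lambda>B. B - {p}"], rule bij_betw_byWitness[where f'="insert p"])
    show "\<forall>a\<in>{B. B \<subseteq> {..<n} \<and> card B = w \<and> p \<in> B}. insert p (a - {p}) = a" by auto
    show "\<forall>a'\<in>{C. C \<subseteq> {..<n} - {p} \<and> card C = w - 1}. insert p a' - {p} = a'" by auto
    show "(\<lambda>B. B - {p}) ` {B. B \<subseteq> {..<n} \<and> card B = w \<and> p \<in> B} \<subseteq> {C. C \<subseteq> {..<n} - {p} \<and> card C = w - 1}"
      by auto
    show "insert p ` {C. C \<subseteq> {..<n} - {p} \<and> card C = w - 1} \<subseteq> {B. B \<subseteq> {..<n} \<and> card B = w \<and> p \<in> B}"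
    proof safe
      fix C assume C: "C \<subseteq> {..<n} - {p}" "card C = w - 1"
      then have "finite C" using finite_subset by blast
      moreover have "p \<notin> C" using C by auto
      ultimately show "card (insert p C) = w" using C assms by simp
    qed (use assms in auto)
  qed
  also have "\<dots> = (n - 1) choose (w - 1)" using assms by (simp add: n_subsets)
  finally show ?thesis .
qed

lemma weight_xor:
  "hweight n (i XOR m) + 2 * card (setof n i \<inter> setof n m) = hweight n i + hweight n m"
proof -
  let ?A = "setof n i" and ?B = "setof n m"
  have f: "finite ?A" "finite ?B" using setof_sub finite_subset by blast+
  have "card ?A = card (?A - ?B) + card (?A \<inter> ?B)"
    using card_Int_Diff[OF f(1), of ?B] by simp
  moreover have "card ?B = card (?B - ?A) + card (?A \<inter> ?B)"
    using card_Int_Diff[OF f(2), of ?A] by (simp add: Int_commute)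
  moreover have "card ((?A - ?B) \<union> (?B - ?A)) = card (?A - ?B) + card (?B - ?A)"
    using f by (intro card_Un_disjoint) auto
  ultimately show ?thesis by (simp add: hweight_setof setof_xor)
qed




definition xmask :: "nat \<Rightarrow> pauli list \<Rightarrow> nat" where
  "xmask n ps = num {k. k < n \<and> (ps ! k = PX \<or> ps ! k = PY)}"

lemma bit_xmask: "bit (xmask n ps) k \<longleftrightarrow> k < n \<and> (ps ! k = PX \<or> ps ! k = PY)"
  unfolding xmask_def by (subst bit_num) auto

lemma xmask_less: "xmask n ps < 2 ^ n"
  unfolding xmask_def by (rule num_less) auto

definition ph :: "nat \<Rightarrow> pauli list \<Rightarrow> nat \<Rightarrow> complex" where
  "ph n ps i = (\<Prod>k<n. pauli_entry (ps ! k) (bit i k) (bit (i XOR xmask n ps) k))"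

lemma pauli_zero:
  assumes "i < 2 ^ n" "j < 2 ^ n" "j \<noteq> i XOR xmask n ps"
  shows "pauli_op n ps i j = 0"
proof -
  obtain k where k: "bit j k \<noteq> bit (i XOR xmask n ps) k"
    using assms(3) bit_eq_iff by blast
  have kn: "k < n"
  proof (rule ccontr)
    assume "\<not> k < n"
    then show False using k assms(1,2) xmask_less[of n ps] xor_less[OF assms(1) xmask_less]
      by (auto simp: less_exp_iff_bits)
  qed
  have "pauli_entry (ps ! k) (bit i k) (bit j k) = 0"
    using k kn by (cases "ps ! k") (auto simp: bit_xor_iff bit_xmask)
  then have "(\<Prod>k<n. pauli_entry (ps ! k) (bit i k) (bit j k)) = 0"
    using kn by (intro prod_zero) auto
  then show ?thesis by (simp add: pauli_op_def)
qed

lemma qapply_pauli: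
  "qapply n (pauli_op n ps) v i = (if i < 2 ^ n then ph n ps i * v (i XOR xmask n ps) else 0)"
proof (cases "i < 2 ^ n")
  case True
  let ?j = "i XOR xmask n ps"
  have jl: "?j < 2 ^ n" using xor_less[OF True xmask_less] .
  have "(\<Sum>j<2 ^ n. pauli_op n ps i j * v j) = (\<Sum>j<2 ^ n. if j = ?j then pauli_op n ps i ?j * v ?j else 0)"
    by (rule sum.cong) (use True pauli_zero in auto)
  also have "\<dots> = pauli_op n ps i ?j * v ?j" using jl by simp
  also have "pauli_op n ps i ?j = ph n ps i" using True jl by (simp add: pauli_op_def ph_def)
  finally show ?thesis using True by (simp add: qapply_def)
qed (simp add: qapply_def)

lemma qinner_pauli:
  "qinner n u (qapply n (pauli_op n ps) v) = (\<Sum>i<2 ^ n. cnj (u i) * ph n ps i * v (i XOR xmask n ps))"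
  unfolding qinner_def qapply_pauli by (rule sum.cong) auto

lemma ph_nonzero: "ph n ps i \<noteq> 0"
  unfolding ph_def
  apply (subst prod_zero_iff, simp)
  apply clarify
  subgoal for k by (cases "ps ! k") (auto simp: bit_xor_iff bit_xmask split: if_splits)
  done

lemma pe_swap: "pauli_entry P y x = (if P = PY then -1 else 1) * pauli_entry P x y"
  by (cases P) auto

lemma pe_neg: "pauli_entry P (\<not> x) (\<not> y) = (if P = PY \<or> P = PZ then -1 else 1) * pauli_entry P x y"
  by (cases P) auto

definition sgnY :: "nat \<Rightarrow> pauli list \<Rightarrow> complex" where
  "sgnY n ps = (\<Prod>k<n. if ps ! k = PY then -1 else 1)"

definition sgnYZ :: "nat \<Rightarrow> pauli list \<Rightarrow> complex" where
  "sgnYZ n ps = (\<Prod>k<n. if ps ! k = PY \<or> ps ! k = PZ then -1 else 1)"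

lemma sym_transpose:
  fixes u :: "nat \<Rightarrow> complex"
  assumes real: "\<And>i. cnj (u i) = u i"
  shows "(\<Sum>i<2 ^ n. cnj (u i) * ph n ps i * u (i XOR xmask n ps))
       = sgnY n ps * (\<Sum>i<2 ^ n. cnj (u i) * ph n ps i * u (i XOR xmask n ps))"
proof -
  let ?m = "xmask n ps"
  let ?f = "\<lambda>i. u i * ph n ps i * u (i XOR ?m)"
  have "(\<Sum>i<2 ^ n. ?f i) = (\<Sum>i<2 ^ n. ?f (i XOR ?m))"
    using sum_xor_reindex[OF xmask_less, of ?f] by simp
  also have "\<dots> = (\<Sum>i<2 ^ n. sgnY n ps * ?f i)"
  proof (rule sum.cong)
    fix i
    have "ph n ps (i XOR ?m) = (\<Prod>k<n. pauli_entry (ps ! k) (bit (i XOR ?m) k) (bit i k))"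
      by (simp add: ph_def xor.assoc)
    also have "\<dots> = (\<Prod>k<n. (if ps ! k = PY then -1 else 1) * pauli_entry (ps ! k) (bit i k) (bit (i XOR ?m) k))"
      by (rule prod.cong) (auto simp: pe_swap[of _ "bit (i XOR ?m) _"])
    also have "\<dots> = sgnY n ps * ph n ps i"
      by (simp add: prod.distrib sgnY_def ph_def)
    finally show "?f (i XOR ?m) = sgnY n ps * ?f i"
      by (simp add: xor.assoc algebra_simps)
  qed simp
  also have "\<dots> = sgnY n ps * (\<Sum>i<2 ^ n. ?f i)" by (rule sum_distrib_left[symmetric])
  finally have "(\<Sum>i<2 ^ n. ?f i) = sgnY n ps * (\<Sum>i<2 ^ n. ?f i)" .
  then show ?thesis using real by simp
qed

definition allm :: "nat \<Rightarrow> nat" where "allm n = num {..<n}"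

lemma bit_allm: "bit (allm n) k \<longleftrightarrow> k < n"
  unfolding allm_def by (subst bit_num) auto

lemma allm_less: "allm n < 2 ^ n"
  unfolding allm_def by (rule num_less) auto

lemma sym_complement:
  fixes u v :: "nat \<Rightarrow> complex"
  assumes vu: "\<And>i. i < 2 ^ n \<Longrightarrow> v i = u (i XOR allm n)"
  shows "(\<Sum>i<2 ^ n. cnj (v i) * ph n ps i * v (i XOR xmask n ps))
       = sgnYZ n ps * (\<Sum>i<2 ^ n. cnj (u i) * ph n ps i * u (i XOR xmask n ps))"
proof -
  let ?m = "xmask n ps" and ?c = "allm n"
  let ?f = "\<lambda>i. cnj (u i) * ph n ps (i XOR ?c) * u (i XOR ?m)"
  have "(\<Sum>i<2 ^ n. cnj (v i) * ph n ps i * v (i XOR ?m)) = (\<Sum>i<2 ^ n. ?f (i XOR ?c))"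
  proof (rule sum.cong)
    fix i :: nat assume "i \<in> {..<2 ^ n}"
    then have i: "i < 2 ^ n" by simp
    have "v (i XOR ?m) = u ((i XOR ?m) XOR ?c)" using vu xor_less[OF i xmask_less] by simp
    moreover have "(i XOR ?c) XOR ?c = i" by (simp add: xor.assoc)
    moreover have "(i XOR ?c) XOR ?m = (i XOR ?m) XOR ?c" by (metis xor.assoc xor.commute)
    ultimately show "cnj (v i) * ph n ps i * v (i XOR ?m) = ?f (i XOR ?c)"
      using vu[OF i] by simp
  qed simp
  also have "\<dots> = (\<Sum>i<2 ^ n. ?f i)" by (rule sum_xor_reindex[OF allm_less])
  also have "\<dots> = (\<Sum>i<2 ^ n. sgnYZ n ps * (cnj (u i) * ph n ps i * u (i XOR ?m)))"
  proof (rule sum.cong)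
    fix i
    have "ph n ps (i XOR ?c) = (\<Prod>k<n. pauli_entry (ps ! k) (\<not> bit i k) (\<not> bit (i XOR ?m) k))"
      unfolding ph_def by (rule prod.cong) (auto simp: bit_xor_iff bit_allm)
    also have "\<dots> = (\<Prod>k<n. (if ps ! k = PY \<or> ps ! k = PZ then -1 else 1) * pauli_entry (ps ! k) (bit i k) (bit (i XOR ?m) k))"
      by (rule prod.cong) (auto simp: pe_neg)
    also have "\<dots> = sgnYZ n ps * ph n ps i"
      by (simp add: prod.distrib sgnYZ_def ph_def)
    finally show "?f i = sgnYZ n ps * (cnj (u i) * ph n ps i * u (i XOR ?m))" by simp
  qed simp
  finally show ?thesis by (simp add: sum_distrib_left)
qed

lemma sum_support_zero:
  assumes "\<And>i. i < 2 ^ n \<Longrightarrow> u i \<noteq> 0 \<Longrightarrow> v (i XOR xmask n ps) \<noteq> 0 \<Longrightarrow> False"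
  shows "(\<Sum>i<2 ^ n. cnj (u i) * ph n ps i * v (i XOR xmask n ps)) = 0"
  by (rule sum.neutral) (use assms in fastforce)

lemma prod_sign: fixes n :: nat shows "(\<Prod>k<n. if P k then -1 else 1 :: complex) = (-1) ^ card {k. k < n \<and> P k}"
proof -
  have "(\<Prod>k<n. if P k then -1 else 1 :: complex) = (\<Prod>k\<in>{k. k < n \<and> P k}. -1)"
  proof -
    have "{k. k < n \<and> P k} = {k \<in> {..<n}. P k}" by auto
    moreover have "(\<Prod>k\<in>{k \<in> {..<n}. P k}. (-1::complex)) = (\<Prod>k<n. if P k then -1 else 1)"
      by (rule prod.inter_filter) simp
    ultimately show ?thesis by simp
  qed
  then show ?thesis by simp
qed

lemma pauli_weight_card:
  assumes "length ps = n"
  shows "pauli_weight ps = card {k. k < n \<and> ps ! k = PX} + card {k. k < n \<and> ps ! k = PY} + card {k. k < n \<and> ps ! k = PZ}"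
proof -
  have "pauli_weight ps = card {k. k < n \<and> ps ! k \<noteq> PI}"
    using assms by (simp add: pauli_weight_def length_filter_conv_card)
  also have "{k. k < n \<and> ps ! k \<noteq> PI} = {k. k < n \<and> ps ! k = PX} \<union> {k. k < n \<and> ps ! k = PY} \<union> {k. k < n \<and> ps ! k = PZ}"
    by (auto intro: pauli.exhaust)
  also have "card \<dots> = card ({k. k < n \<and> ps ! k = PX} \<union> {k. k < n \<and> ps ! k = PY}) + card {k. k < n \<and> ps ! k = PZ}"
    by (rule card_Un_disjoint) auto
  also have "card ({k. k < n \<and> ps ! k = PX} \<union> {k. k < n \<and> ps ! k = PY}) = card {k. k < n \<and> ps ! k = PX} + card {k. k < n \<and> ps ! k = PY}"
    by (rule card_Un_disjoint) auto
  finally show ?thesis .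
qed

lemma hweight_xmask:
  "hweight n (xmask n ps) = card {k. k < n \<and> ps ! k = PX} + card {k. k < n \<and> ps ! k = PY}"
proof -
  have "hweight n (xmask n ps) = card ({k. k < n \<and> ps ! k = PX} \<union> {k. k < n \<and> ps ! k = PY})"
    unfolding hweight_def bit_xmask by (rule arg_cong[where f=card]) auto
  also have "\<dots> = card {k. k < n \<and> ps ! k = PX} + card {k. k < n \<and> ps ! k = PY}"
    by (rule card_Un_disjoint) auto
  finally show ?thesis .
qed

lemma sgnY_eq: "sgnY n ps = (-1) ^ card {k. k < n \<and> ps ! k = PY}"
  unfolding sgnY_def by (rule prod_sign)

lemma sgnYZ_eq: "sgnYZ n ps = (-1) ^ (card {k. k < n \<and> ps ! k = PY} + card {k. k < n \<and> ps ! k = PZ})"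
proof -
  have "sgnYZ n ps = (-1) ^ card ({k. k < n \<and> ps ! k = PY} \<union> {k. k < n \<and> ps ! k = PZ})"
    unfolding sgnYZ_def prod_sign by (rule arg_cong[where f="\<lambda>x. (-1) ^ card x"]) auto
  also have "card ({k. k < n \<and> ps ! k = PY} \<union> {k. k < n \<and> ps ! k = PZ}) = card {k. k < n \<and> ps ! k = PY} + card {k. k < n \<and> ps ! k = PZ}"
    by (rule card_Un_disjoint) auto
  finally show ?thesis .
qed




lemma sum_indicator:
  assumes "finite A"
  shows "(\<Sum>i\<in>A. if P i then (1::real) else 0) = real (card {i\<in>A. P i})"
proof -
  have "(\<Sum>i\<in>{i\<in>A. P i}. (1::real)) = (\<Sum>i\<in>A. if P i then 1 else 0)"
    by (rule sum.inter_filter) (rule assms)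
  then show ?thesis by simp
qed

lemma bits_lt: "(i::nat) < 2 ^ n \<Longrightarrow> bit i k \<Longrightarrow> k < n"
  by (auto simp: less_exp_iff_bits)

lemma hweight_le: "hweight n i \<le> n"
proof -
  have "hweight n i \<le> card {..<n}" unfolding hweight_def by (rule card_mono) auto
  then show ?thesis by simp
qed

lemma hweight_comp:
  assumes "i < 2 ^ n"
  shows "hweight n (i XOR allm n) = n - hweight n i"
proof -
  have "{k. k < n \<and> bit (i XOR allm n) k} = {..<n} - {k. k < n \<and> bit i k}"
    by (auto simp: bit_xor_iff bit_allm)
  then have "hweight n (i XOR allm n) = card ({..<n} - {k. k < n \<and> bit i k})"
    by (simp add: hweight_def)
  also have "\<dots> = n - hweight n i"
    by (subst card_Diff_subset) (auto simp: hweight_def)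
  finally show ?thesis .
qed

lemma dicke_comp:
  assumes "i < 2 ^ n" "w \<le> n"
  shows "dicke n w (i XOR allm n) = dicke n (n - w) i"
proof -
  have l: "i XOR allm n < 2 ^ n" using xor_less[OF assms(1) allm_less] .
  have "(hweight n (i XOR allm n) = w) \<longleftrightarrow> (hweight n i = n - w)"
    using hweight_comp[OF assms(1)] hweight_le[of n i] assms(2) by auto
  then show ?thesis using l assms binomial_symmetric[OF assms(2)] by (simp add: dicke_def)
qed

lemma hweight_zero: "i < 2 ^ n \<Longrightarrow> hweight n i = 0 \<longleftrightarrow> i = 0"
proof
  assume "i < 2 ^ n" "hweight n i = 0"
  then have "setof n i = {}" using setof_sub[of n i] finite_subset
    by (metis card_0_eq finite_lessThan hweight_setof)
  then show "i = 0" using num_setof[OF \<open>i < 2 ^ n\<close>] by (simp add: num_def)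
qed (simp add: hweight_def)

lemma hweight_allm: "hweight n (allm n) = n"
  by (simp add: hweight_def bit_allm)

definition dr :: "nat \<Rightarrow> nat \<Rightarrow> nat \<Rightarrow> real" where
  "dr n w i = (if i < 2 ^ n \<and> hweight n i = w then 1 / sqrt (real (n choose w)) else 0)"

lemma dicke_dr: "dicke n w i = complex_of_real (dr n w i)"
  by (simp add: dicke_def dr_def)

definition r0 :: "nat \<Rightarrow> nat \<Rightarrow> real" where
  "r0 b i = 1 / sqrt (real (4 * b)) * (sqrt (real (4 * b) - real (2 * b + 3)) * dr (2 * b + 3) 0 i
           + sqrt (real (2 * b + 3)) * dr (2 * b + 3) (2 * b) i)"

lemma c0_r0: "codeword0 b i = complex_of_real (r0 b i)"
  by (simp add: codeword0_def r0_def dicke_dr Let_def)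

lemma c1_real: "cnj (codeword1 b i) = codeword1 b i"
  by (simp add: codeword1_def dicke_dr Let_def)

lemma c0_real: "cnj (codeword0 b i) = codeword0 b i"
  by (simp add: c0_r0)

lemma c0_supp:
  assumes "codeword0 b i \<noteq> 0"
  shows "i < 2 ^ (2 * b + 3) \<and> (hweight (2 * b + 3) i = 0 \<or> hweight (2 * b + 3) i = 2 * b)"
  using assms by (auto simp: codeword0_def dicke_def Let_def split: if_splits)

lemma c1_supp:
  assumes "codeword1 b i \<noteq> 0"
  shows "i < 2 ^ (2 * b + 3) \<and> (hweight (2 * b + 3) i = 3 \<or> hweight (2 * b + 3) i = 2 * b + 3)"
  using assms by (auto simp: codeword1_def dicke_def Let_def split: if_splits)

lemma c1_comp:
  assumes "i < 2 ^ (2 * b + 3)"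
  shows "codeword1 b i = codeword0 b (i XOR allm (2 * b + 3))"
  using dicke_comp[OF assms, of 0] dicke_comp[OF assms, of "2 * b"]
  by (simp add: codeword0_def codeword1_def Let_def algebra_simps)

lemma c0_zero:
  assumes "b \<ge> 2"
  shows "codeword0 b 0 \<noteq> 0"
proof -
  have "codeword0 b 0 = complex_of_real (1 / sqrt (real (4 * b)) * sqrt (real (4 * b) - real (2 * b + 3)))"
    using assms by (simp add: codeword0_def dicke_def hweight_def Let_def)
  moreover have "1 / sqrt (real (4 * b)) * sqrt (real (4 * b) - real (2 * b + 3)) > 0"
    using assms by (intro mult_pos_pos) auto
  ultimately show ?thesis by (metis of_real_eq_0_iff less_irrefl)
qed




lemma sigma_sum:
  assumes "p < n" "w \<ge> 1"
  shows "(\<Sum>i<2 ^ n. if hweight n i = w then (if bit i p then -1 else 1) else (0::real))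
         = real (n choose w) - 2 * real ((n - 1) choose (w - 1))"
proof -
  have "(\<Sum>i<2 ^ n. if hweight n i = w then (if bit i p then -1 else 1) else (0::real))
      = (\<Sum>i<2 ^ n. (if hweight n i = w then 1 else 0) - 2 * (if hweight n i = w \<and> bit i p then 1 else (0::real)))"
    by (rule sum.cong) auto
  also have "\<dots> = (\<Sum>i<2 ^ n. if hweight n i = w then 1 else (0::real)) - 2 * (\<Sum>i<2 ^ n. if hweight n i = w \<and> bit i p then 1 else (0::real))"
    by (simp add: sum_subtractf sum_distrib_left)
  also have "(\<Sum>i<2 ^ n. if hweight n i = w then 1 else (0::real)) = real (card {i. i < 2 ^ n \<and> hweight n i = w})"
    by (subst sum_indicator) (auto intro!: arg_cong[where f="\<lambda>x. real (card x)"])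
  also have "(\<Sum>i<2 ^ n. if hweight n i = w \<and> bit i p then 1 else (0::real)) = real (card {i. i < 2 ^ n \<and> hweight n i = w \<and> bit i p})"
    by (subst sum_indicator) (auto intro!: arg_cong[where f="\<lambda>x. real (card x)"])
  finally show ?thesis using card_weight card_weight_bit[OF assms] by simp
qed

lemma Zp_zero:
  assumes b: "b \<ge> 2" and p: "p < 2 * b + 3"
    and ps: "\<forall>k < 2 * b + 3. ps ! k = (if k = p then PZ else PI)"
  shows "(\<Sum>i<2 ^ (2 * b + 3). cnj (codeword0 b i) * ph (2 * b + 3) ps i * codeword0 b (i XOR xmask (2 * b + 3) ps)) = 0"
proof -
  let ?n = "2 * b + 3"
  have m0: "xmask ?n ps = 0"
    by (rule bit_eqI) (use ps in \<open>auto simp: bit_xmask\<close>)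
  define \<sigma> where "\<sigma> i = (if bit i p then -1 else (1::real))" for i :: nat
  have phv: "ph ?n ps i = complex_of_real (\<sigma> i)" for i
  proof -
    have "ph ?n ps i = (\<Prod>k<?n. if k = p then complex_of_real (\<sigma> i) else 1)"
      unfolding ph_def m0 by (rule prod.cong) (auto simp: ps \<sigma>_def)
    also have "\<dots> = complex_of_real (\<sigma> i)" using p by (simp add: prod.delta)
    finally show ?thesis .
  qed
  define K where "K = 1 / sqrt (real (4 * b))"
  define s1 where "s1 = sqrt (real (4 * b) - real ?n)"
  define s2 where "s2 = sqrt (real ?n)"
  define C where "C = real (?n choose (2 * b))"
  have Cpos: "C > 0" unfolding C_def by simp
  have s1sq: "s1 ^ 2 = real (4 * b) - real ?n" unfolding s1_def using b by simp
  have s2sq: "s2 ^ 2 = real ?n" unfolding s2_def by simp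
  have r0sq: "(r0 b i) ^ 2 = K ^ 2 * (s1 ^ 2 * (if i < 2 ^ ?n \<and> hweight ?n i = 0 then 1 else 0)
       + s2 ^ 2 / C * (if i < 2 ^ ?n \<and> hweight ?n i = 2 * b then 1 else 0))" for i
  proof -
    let ?d0 = "dr ?n 0 i" and ?d2 = "dr ?n (2 * b) i"
    have dr0sq: "?d0 ^ 2 = (if i < 2 ^ ?n \<and> hweight ?n i = 0 then 1 else 0)" by (simp add: dr_def)
    have dr2sq: "?d2 ^ 2 = (if i < 2 ^ ?n \<and> hweight ?n i = 2 * b then 1 / C else 0)"
      by (simp add: dr_def C_def power_divide)
    have pr: "?d0 * ?d2 = 0" using b by (simp add: dr_def)
    have "r0 b i = K * (s1 * ?d0 + s2 * ?d2)" by (simp add: r0_def K_def s1_def s2_def)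
    then have "(r0 b i) ^ 2 = K ^ 2 * (s1 ^ 2 * ?d0 ^ 2 + s2 ^ 2 * ?d2 ^ 2 + 2 * s1 * s2 * (?d0 * ?d2))"
      by (simp add: power2_eq_square algebra_simps)
    then show ?thesis unfolding dr0sq dr2sq pr by simp
  qed
  have "(\<Sum>i<2 ^ ?n. cnj (codeword0 b i) * ph ?n ps i * codeword0 b (i XOR xmask ?n ps))
      = complex_of_real (\<Sum>i<2 ^ ?n. \<sigma> i * (r0 b i) ^ 2)"
    unfolding m0 phv c0_r0 by (simp add: power2_eq_square algebra_simps)
  also have "(\<Sum>i<2 ^ ?n. \<sigma> i * (r0 b i) ^ 2)
     = K ^ 2 * (s1 ^ 2 * (\<Sum>i<2 ^ ?n. if hweight ?n i = 0 then \<sigma> i else 0)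
               + s2 ^ 2 / C * (\<Sum>i<2 ^ ?n. if hweight ?n i = 2 * b then \<sigma> i else 0))"
  proof -
    have "(\<Sum>i<2 ^ ?n. \<sigma> i * (r0 b i) ^ 2) = (\<Sum>i<2 ^ ?n. K ^ 2 * s1 ^ 2 * (if hweight ?n i = 0 then \<sigma> i else 0)
               + K ^ 2 * (s2 ^ 2 / C) * (if hweight ?n i = 2 * b then \<sigma> i else 0))"
      by (rule sum.cong) (use b in \<open>auto simp: r0sq algebra_simps\<close>)
    also have "\<dots> = K ^ 2 * s1 ^ 2 * (\<Sum>i<2 ^ ?n. if hweight ?n i = 0 then \<sigma> i else 0)
               + K ^ 2 * (s2 ^ 2 / C) * (\<Sum>i<2 ^ ?n. if hweight ?n i = 2 * b then \<sigma> i else 0)"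
      by (simp add: sum.distrib sum_distrib_left)
    finally show ?thesis by (simp add: algebra_simps)
  qed
  also have "(\<Sum>i<2 ^ ?n. if hweight ?n i = 0 then \<sigma> i else 0) = (\<Sum>i::nat<2 ^ ?n. if i = 0 then 1 else (0::real))"
    by (rule sum.cong) (auto simp: hweight_zero \<sigma>_def)
  also have "\<dots> = 1" by simp
  also have "(\<Sum>i<2 ^ ?n. if hweight ?n i = 2 * b then \<sigma> i else 0) = C - 2 * real ((?n - 1) choose (2 * b - 1))"
    unfolding \<sigma>_def C_def using sigma_sum[OF p, of "2 * b"] b by simp
  also have "real ?n * real ((?n - 1) choose (2 * b - 1)) = real (2 * b) * C"
  proof -
    have "Suc (2 * b - 1) * (?n choose Suc (2 * b - 1)) = ?n * ((?n - 1) choose (2 * b - 1))"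
      by (rule binomial_absorption)
    then have "(2 * b) * (?n choose (2 * b)) = ?n * ((?n - 1) choose (2 * b - 1))" using b by simp
    then show ?thesis unfolding C_def by (metis of_nat_mult)
  qed
  then have "s2 ^ 2 / C * (C - 2 * real ((?n - 1) choose (2 * b - 1))) = real ?n - 4 * real b"
    using Cpos unfolding s2sq by (simp add: field_simps)
  then have "K ^ 2 * (s1 ^ 2 * 1 + s2 ^ 2 / C * (C - 2 * real ((?n - 1) choose (2 * b - 1)))) = 0"
    unfolding s1sq by simp
  finally show ?thesis by simp
qed




lemma supp_zero_gen:
  fixes u v :: "nat \<Rightarrow> complex"
  assumes "\<And>i. u i \<noteq> 0 \<Longrightarrow> P (hweight n i)" "\<And>i. v i \<noteq> 0 \<Longrightarrow> Q (hweight n i)"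
    and "\<And>w w' s. P w \<Longrightarrow> Q w' \<Longrightarrow> s \<le> hweight n (xmask n ps)
           \<Longrightarrow> w' + 2 * s = w + hweight n (xmask n ps) \<Longrightarrow> False"
  shows "(\<Sum>i<2 ^ n. cnj (u i) * ph n ps i * v (i XOR xmask n ps)) = 0"
proof (rule sum_support_zero)
  fix i assume "u i \<noteq> 0" "v (i XOR xmask n ps) \<noteq> 0"
  moreover have "card (setof n i \<inter> setof n (xmask n ps)) \<le> hweight n (xmask n ps)"
    unfolding hweight_setof by (rule card_mono[OF finite_subset[OF setof_sub finite_lessThan]]) auto
  ultimately show False using assms weight_xor[of n i "xmask n ps"] by blast
qed

abbreviation S :: "nat \<Rightarrow> pauli list \<Rightarrow> (nat \<Rightarrow> complex) \<Rightarrow> (nat \<Rightarrow> complex) \<Rightarrow> complex" where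
  "S n ps u v \<equiv> (\<Sum>i<2 ^ n. cnj (u i) * ph n ps i * v (i XOR xmask n ps))"

lemma KL:
  assumes b: "b \<ge> 5" and len: "length ps = 2 * b + 3" and wt: "pauli_weight ps \<le> 2"
  shows "S (2 * b + 3) ps (codeword0 b) (codeword1 b) = 0"
    and "S (2 * b + 3) ps (codeword1 b) (codeword0 b) = 0"
    and "S (2 * b + 3) ps (codeword1 b) (codeword1 b) = S (2 * b + 3) ps (codeword0 b) (codeword0 b)"
proof -
  let ?n = "2 * b + 3"
  let ?M = "hweight ?n (xmask ?n ps)"
  define cX where "cX = card {k. k < ?n \<and> ps ! k = PX}"
  define cY where "cY = card {k. k < ?n \<and> ps ! k = PY}"
  define cZ where "cZ = card {k. k < ?n \<and> ps ! k = PZ}"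
  have cnt: "cX + cY + cZ \<le> 2" using pauli_weight_card[OF len] wt by (simp add: cX_def cY_def cZ_def)
  have M: "?M = cX + cY" by (simp add: hweight_xmask cX_def cY_def)
  show "S ?n ps (codeword0 b) (codeword1 b) = 0"
    by (rule supp_zero_gen[where P="\<lambda>w. w = 0 \<or> w = 2 * b" and Q="\<lambda>w. w = 3 \<or> w = 2 * b + 3"])
       (use c0_supp c1_supp M cnt b in \<open>auto\<close>)
  show "S ?n ps (codeword1 b) (codeword0 b) = 0"
    by (rule supp_zero_gen[where Q="\<lambda>w. w = 0 \<or> w = 2 * b" and P="\<lambda>w. w = 3 \<or> w = 2 * b + 3"])
       (use c0_supp c1_supp M cnt b in \<open>auto\<close>)
  have sym1: "S ?n ps (codeword1 b) (codeword1 b) = sgnYZ ?n ps * S ?n ps (codeword0 b) (codeword0 b)"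
    by (rule sym_complement) (rule c1_comp)
  have t0: "S ?n ps (codeword0 b) (codeword0 b) = sgnY ?n ps * S ?n ps (codeword0 b) (codeword0 b)"
    by (rule sym_transpose) (rule c0_real)
  have t1: "S ?n ps (codeword1 b) (codeword1 b) = sgnY ?n ps * S ?n ps (codeword1 b) (codeword1 b)"
    by (rule sym_transpose) (rule c1_real)
  have sY: "sgnY ?n ps = (-1) ^ cY" by (simp add: sgnY_eq cY_def)
  have sYZ: "sgnYZ ?n ps = (-1) ^ (cY + cZ)" by (simp add: sgnYZ_eq cY_def cZ_def)
  show "S ?n ps (codeword1 b) (codeword1 b) = S ?n ps (codeword0 b) (codeword0 b)"
  proof (cases "odd cY")
    case True
    then have "sgnY ?n ps = -1" using sY by simp
    then have "S ?n ps (codeword0 b) (codeword0 b) = 0" "S ?n ps (codeword1 b) (codeword1 b) = 0"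
      using t0 t1 by auto
    then show ?thesis by simp
  next
    case evY: False
    show ?thesis
    proof (cases "even cZ")
      case True
      then have "sgnYZ ?n ps = 1" using sYZ evY by simp
      then show ?thesis using sym1 by simp
    next
      case False
      then have "sgnYZ ?n ps = -1" using sYZ evY by simp
      have cz1: "cZ = 1" and cy0: "cY = 0" using False evY cnt by presburger+
      have "S ?n ps (codeword0 b) (codeword0 b) = 0"
      proof (cases "cX = 1")
        case True
        have M1: "?M = 1" using M True cy0 by simp
        show ?thesis
        proof (rule supp_zero_gen[where P="\<lambda>w. w = 0 \<or> w = 2 * b" and Q="\<lambda>w. w = 0 \<or> w = 2 * b"])
          fix w w' s assume "w = 0 \<or> w = 2 * b" "w' = 0 \<or> w' = 2 * b" "w' + 2 * s = w + ?M"
          then show False unfolding M1 by presburger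
        qed (use c0_supp in auto)
      next
        case False
        then have cx0: "cX = 0" using cnt cz1 by simp
        obtain p where p: "{k. k < ?n \<and> ps ! k = PZ} = {p}"
          using cz1 unfolding cZ_def by (meson card_1_singletonE)
        have "{k. k < ?n \<and> ps ! k = PX} = {}" using cx0 unfolding cX_def by simp
        moreover have "{k. k < ?n \<and> ps ! k = PY} = {}" using cy0 unfolding cY_def by simp
        ultimately have psk: "\<forall>k < ?n. ps ! k = (if k = p then PZ else PI)"
          using p by (auto intro: pauli.exhaust)
        have "p < ?n" using p by auto
        then show ?thesis using Zp_zero[of b p ps] psk b by simp
      qed
      then show ?thesis using sym1 by simp
    qed
  qed
qed




lemma S_id: "S n (replicate n PI) u v = qinner n u v"
proof -
  have m0: "xmask n (replicate n PI) = 0" by (rule bit_eqI) (auto simp: bit_xmask)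
  have "ph n (replicate n PI) i = 1" for i unfolding ph_def m0 by (rule prod.neutral) auto
  then show ?thesis by (simp add: m0 qinner_def)
qed

lemma pw_id: "pauli_weight (replicate n PI) = 0"
  by (simp add: pauli_weight_def)

lemma qinner_lin_left:
  "qinner n (\<lambda>i. a * u i + c * v i) w = cnj a * qinner n u w + cnj c * qinner n v w"
  by (simp add: qinner_def sum.distrib sum_distrib_left algebra_simps)

lemma qinner_lin_right:
  "qinner n w (\<lambda>i. a * u i + c * v i) = a * qinner n w u + c * qinner n w v"
  by (simp add: qinner_def sum.distrib sum_distrib_left algebra_simps)

lemma qapply_lin:
  "qapply n A (\<lambda>i. a * u i + c * v i) = (\<lambda>i. a * qapply n A u i + c * qapply n A v i)"
  by (auto simp: qapply_def sum.distrib sum_distrib_left algebra_simps)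

lemma norm_nonzero:
  assumes "b \<ge> 2"
  shows "qinner (2 * b + 3) (codeword0 b) (codeword0 b) \<noteq> 0"
proof -
  let ?n = "2 * b + 3"
  have eq: "qinner ?n (codeword0 b) (codeword0 b) = complex_of_real (\<Sum>i<2 ^ ?n. (r0 b i) ^ 2)"
    by (simp add: qinner_def c0_r0 power2_eq_square)
  have "r0 b 0 \<noteq> 0" using c0_zero[OF assms] by (simp add: c0_r0)
  then have "0 < (r0 b 0) ^ 2" by simp
  also have "(r0 b 0) ^ 2 \<le> (\<Sum>i<2 ^ ?n. (r0 b i) ^ 2)"
    by (rule member_le_sum) auto
  finally show ?thesis using eq by (metis less_irrefl of_real_eq_0_iff)
qed

lemma code_distance:
  assumes b: "b \<ge> 5"
  shows "qecc_distance (2 * b + 3) (span2 (codeword0 b) (codeword1 b)) 3"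
  unfolding qecc_distance_def
proof (intro allI impI)
  let ?n = "2 * b + 3"
  fix ps :: "pauli list" assume h: "length ps = ?n \<and> pauli_weight ps < 3"
  let ?E = "pauli_op ?n ps"
  let ?N = "qinner ?n (codeword0 b) (codeword0 b)"
  let ?e = "qinner ?n (codeword0 b) (qapply ?n ?E (codeword0 b))"
  have N: "?N \<noteq> 0" using norm_nonzero b by simp
  have kl: "qinner ?n (codeword0 b) (qapply ?n ?E (codeword1 b)) = 0"
     "qinner ?n (codeword1 b) (qapply ?n ?E (codeword0 b)) = 0"
     "qinner ?n (codeword1 b) (qapply ?n ?E (codeword1 b)) = ?e"
    using KL[OF b, of ps] h by (simp_all add: qinner_pauli)
  have idl: "length (replicate ?n PI) = ?n" "pauli_weight (replicate ?n PI) \<le> 2" by (simp_all add: pw_id)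
  have id: "qinner ?n (codeword0 b) (codeword1 b) = 0"
     "qinner ?n (codeword1 b) (codeword0 b) = 0"
     "qinner ?n (codeword1 b) (codeword1 b) = ?N"
    using KL[OF b idl(1) idl(2)] by (simp_all add: S_id)
  show "\<exists>c. \<forall>\<phi>\<in>span2 (codeword0 b) (codeword1 b). \<forall>\<psi>\<in>span2 (codeword0 b) (codeword1 b).
          qinner ?n \<phi> (qapply ?n ?E \<psi>) = c * qinner ?n \<phi> \<psi>"
  proof (intro exI[of _ "?e / ?N"] ballI)
    fix \<phi> \<psi> assume "\<phi> \<in> span2 (codeword0 b) (codeword1 b)" "\<psi> \<in> span2 (codeword0 b) (codeword1 b)"
    then obtain a1 b1 a2 b2 where \<phi>: "\<phi> = (\<lambda>i. a1 * codeword0 b i + b1 * codeword1 b i)"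
      and \<psi>: "\<psi> = (\<lambda>i. a2 * codeword0 b i + b2 * codeword1 b i)" by (auto simp: span2_def)
    show "qinner ?n \<phi> (qapply ?n ?E \<psi>) = ?e / ?N * qinner ?n \<phi> \<psi>"
      unfolding \<phi> \<psi> qapply_lin qinner_lin_left qinner_lin_right kl id
      using N by (simp add: field_simps)
  qed
qed

lemma perm_index_num:
  assumes "bij_betw \<sigma> {..<n} {..<n}"
  shows "perm_index n \<sigma> i = num (\<sigma> ` setof n i)"
proof -
  have inj: "inj_on \<sigma> (setof n i)" using bij_betw_imp_inj_on[OF assms] setof_sub inj_on_subset by blast
  have "perm_index n \<sigma> i = (\<Sum>k\<in>{k \<in> {..<n}. bit i k}. 2 ^ \<sigma> k)"
    unfolding perm_index_def by (rule sum.inter_filter[symmetric]) simp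
  also have "{k \<in> {..<n}. bit i k} = setof n i" by (auto simp: setof_def)
  also have "(\<Sum>k\<in>setof n i. 2 ^ \<sigma> k) = num (\<sigma> ` setof n i)"
    unfolding num_def by (rule sum.reindex[OF inj, symmetric, unfolded comp_def])
  finally show ?thesis .
qed

lemma perm_props:
  assumes "bij_betw \<sigma> {..<n} {..<n}" "i < 2 ^ n"
  shows "perm_index n \<sigma> i < 2 ^ n \<and> hweight n (perm_index n \<sigma> i) = hweight n i"
proof -
  have sub: "\<sigma> ` setof n i \<subseteq> {..<n}" using assms(1) setof_sub bij_betw_imp_surj_on by blast
  have inj: "inj_on \<sigma> (setof n i)" using bij_betw_imp_inj_on[OF assms(1)] setof_sub inj_on_subset by blast
  show ?thesis
    unfolding perm_index_num[OF assms(1)] hweight_setof setof_num[OF sub]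
    using num_less[OF sub] card_image[OF inj] by simp
qed

lemma perm_inv:
  shows "perm_invariant (2 * b + 3) (span2 (codeword0 b) (codeword1 b))"
  unfolding perm_invariant_def
proof (intro allI impI ballI)
  fix \<sigma> v and i :: nat assume s: "bij_betw \<sigma> {..<2 * b + 3} {..<2 * b + 3}" and v: "v \<in> span2 (codeword0 b) (codeword1 b)"
    and i: "i < 2 ^ (2 * b + 3)"
  obtain a c where vd: "v = (\<lambda>i. a * codeword0 b i + c * codeword1 b i)" using v by (auto simp: span2_def)
  have "dicke (2 * b + 3) w (perm_index (2 * b + 3) \<sigma> i) = dicke (2 * b + 3) w i" for w
    using perm_props[OF s i] i by (simp add: dicke_def)
  then show "v (perm_index (2 * b + 3) \<sigma> i) = v i"
    by (simp add: vd codeword0_def codeword1_def Let_def)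
qed

lemma lin_indep:
  assumes b: "b \<ge> 2"
  shows "lin_indep2 (codeword0 b) (codeword1 b)"
  unfolding lin_indep2_def
proof (intro allI impI)
  let ?n = "2 * b + 3"
  fix a c assume h: "(\<lambda>i. a * codeword0 b i + c * codeword1 b i) = (\<lambda>i. 0)"
  have c10: "codeword1 b 0 = 0" using c1_supp[of b 0] by (auto simp: hweight_def)
  have "a * codeword0 b 0 + c * codeword1 b 0 = 0" using h by (metis)
  then have a0: "a = 0" using c10 c0_zero[OF b] by simp
  have al: "allm ?n < 2 ^ ?n" by (rule allm_less)
  have "codeword1 b (allm ?n) = codeword0 b 0" using c1_comp[OF al] by simp
  then have c1n: "codeword1 b (allm ?n) \<noteq> 0" using c0_zero[OF b] by simp
  have c0n: "codeword0 b (allm ?n) = 0" using c0_supp[of b "allm ?n"] hweight_allm[of ?n] by auto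
  have "a * codeword0 b (allm ?n) + c * codeword1 b (allm ?n) = 0" using h by metis
  then have "c = 0" using c0n c1n by simp
  then show "a = 0 \<and> c = 0" using a0 by simp
qed

lemma is_code:
  assumes b: "b \<ge> 5"
  shows "is_code_n2d (2 * b + 3) 3 (codeword0 b) (codeword1 b)"
  unfolding is_code_n2d_def
  using code_distance[OF b] lin_indep[of b] b c0_supp[of b] c1_supp[of b]
  by (auto simp: qvecs_def) (meson leD)+




lemma c0_nonzero:
  assumes b: "b \<ge> 2" and i: "i < 2 ^ (2 * b + 3)" and w: "hweight (2 * b + 3) i = 2 * b"
  shows "codeword0 b i \<noteq> 0"
proof -
  have "codeword0 b i = complex_of_real (1 / sqrt (real (4 * b)) * (sqrt (real (2 * b + 3)) * (1 / sqrt (real ((2 * b + 3) choose (2 * b))))))"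
    using b i w by (simp add: codeword0_def dicke_def Let_def)
  moreover have "1 / sqrt (real (4 * b)) * (sqrt (real (2 * b + 3)) * (1 / sqrt (real ((2 * b + 3) choose (2 * b))))) > 0"
    using b by (intro mult_pos_pos) auto
  ultimately show ?thesis by (metis of_real_eq_0_iff less_irrefl)
qed

lemma qapply_qscale: "qapply n (qscale c A) v = (\<lambda>j. c * qapply n A v j)"
  by (auto simp: qapply_def qscale_def sum_distrib_left algebra_simps)

lemma stab_diag:
  assumes b: "b \<ge> 2" and len: "length ps = 2 * b + 3"
    and fix0: "qapply (2 * b + 3) (qscale \<rho> (pauli_op (2 * b + 3) ps)) (codeword0 b) = codeword0 b"
  shows "xmask (2 * b + 3) ps = 0"
proof -
  let ?n = "2 * b + 3" and ?m = "xmask (2 * b + 3) ps"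
  have eq: "codeword0 b j = \<rho> * (if j < 2 ^ ?n then ph ?n ps j * codeword0 b (j XOR ?m) else 0)" for j
    using fun_cong[OF fix0, of j] by (simp add: qapply_qscale qapply_pauli)
  have ml: "?m < 2 ^ ?n" by (rule xmask_less)
  have "codeword0 b ?m = \<rho> * (ph ?n ps ?m * codeword0 b 0)" using eq[of ?m] ml by simp
  moreover have "\<rho> \<noteq> 0"
  proof
    assume "\<rho> = 0" then have "codeword0 b 0 = 0" using eq[of 0] by simp
    then show False using c0_zero[OF b] by simp
  qed
  ultimately have "codeword0 b ?m \<noteq> 0" using ph_nonzero c0_zero[OF b] by simp
  then have wm: "hweight ?n ?m = 0 \<or> hweight ?n ?m = 2 * b" using c0_supp by blast
  show ?thesis
  proof (cases "hweight ?n ?m = 0")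
    case True then show ?thesis using hweight_zero[OF ml] by simp
  next
    case False
    then have w2: "hweight ?n ?m = 2 * b" using wm by simp
    let ?B = "setof ?n ?m"
    have fB: "finite ?B" using setof_sub finite_subset by blast
    have cB: "card ?B = 2 * b" using w2 by (simp add: hweight_setof)
    then have "?B \<noteq> {}" using b by auto
    then obtain p where p: "p \<in> ?B" by blast
    have "card ({..<?n} - ?B) = 3" using cB by (simp add: card_Diff_subset[OF fB setof_sub])
    then have "{..<?n} - ?B \<noteq> {}" by (metis card.empty zero_neq_numeral)
    then obtain q where q: "q \<in> {..<?n} - ?B" by blast
    let ?A = "(?B - {p}) \<union> {q}"
    have Asub: "?A \<subseteq> {..<?n}" using q setof_sub p by auto
    let ?j = "num ?A"
    have jl: "?j < 2 ^ ?n" using num_less[OF Asub] .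
    have sj: "setof ?n ?j = ?A" using setof_num[OF Asub] .
    have "card ?A = card (?B - {p}) + 1" using q fB by (subst card_Un_disjoint) auto
    also have "card (?B - {p}) = 2 * b - 1" using p cB fB by simp
    finally have cA: "card ?A = 2 * b" using b by simp
    have "hweight ?n ?j = 2 * b" unfolding hweight_setof sj using cA .
    then have c0j: "codeword0 b ?j \<noteq> 0" using c0_nonzero[OF b jl] by simp
    have "setof ?n (?j XOR ?m) = {p, q}" unfolding setof_xor sj using p q by auto
    moreover have "p \<noteq> q" using p q by auto
    ultimately have "hweight ?n (?j XOR ?m) = 2" by (simp add: hweight_setof)
    then have "codeword0 b (?j XOR ?m) = 0" using c0_supp[of b "?j XOR ?m"] b by auto
    then have "codeword0 b ?j = 0" using eq[of ?j] by simp
    then show ?thesis using c0j by simp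
  qed
qed

lemma non_add:
  assumes b: "b \<ge> 2"
  shows "non_additive (2 * b + 3) (span2 (codeword0 b) (codeword1 b))"
  unfolding non_additive_def is_stabilizer_code_def
proof
  let ?n = "2 * b + 3"
  assume "\<exists>S. abelian_pauli_subgroup ?n S \<and> qscale (- 1) (qid ?n) \<notin> S \<and> span2 (codeword0 b) (codeword1 b) = stabilizer_space ?n S"
  then obtain S where sub: "S \<subseteq> pauli_group ?n" and C: "span2 (codeword0 b) (codeword1 b) = stabilizer_space ?n S"
    unfolding abelian_pauli_subgroup_def by blast
  define e0 where "e0 = (\<lambda>i::nat. if i = 0 then (1::complex) else 0)"
  have c0in: "codeword0 b \<in> stabilizer_space ?n S"
    unfolding C[symmetric] span2_def by (rule CollectI, rule exI[of _ 1], rule exI[of _ 0]) simp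
  have "e0 \<in> stabilizer_space ?n S"
    unfolding stabilizer_space_def
  proof (intro CollectI conjI ballI)
    show "e0 \<in> qvecs ?n" by (auto simp: qvecs_def e0_def)
    fix A assume A: "A \<in> S"
    then obtain \<rho> ps where Ad: "A = qscale \<rho> (pauli_op ?n ps)" and len: "length ps = ?n"
      using sub unfolding pauli_group_def by blast
    have fix0: "qapply ?n A (codeword0 b) = codeword0 b" using c0in A by (simp add: stabilizer_space_def)
    have m0: "xmask ?n ps = 0" using stab_diag[OF b len] fix0 Ad by simp
    have "codeword0 b 0 = \<rho> * (ph ?n ps 0 * codeword0 b 0)"
      using fun_cong[OF fix0, of 0] Ad by (simp add: qapply_qscale qapply_pauli m0)
    then have r1: "\<rho> * ph ?n ps 0 = 1" using c0_zero[OF b]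
      by (metis mult.assoc mult_cancel_right1)
    show "qapply ?n A e0 = e0"
      by (rule ext) (auto simp: Ad qapply_qscale qapply_pauli m0 e0_def r1)
  qed
  then have "e0 \<in> span2 (codeword0 b) (codeword1 b)" using C by simp
  then obtain \<alpha> \<beta> where e: "e0 = (\<lambda>i. \<alpha> * codeword0 b i + \<beta> * codeword1 b i)" by (auto simp: span2_def)
  have c10: "codeword1 b 0 = 0" using c1_supp[of b 0] by (auto simp: hweight_def)
  have "1 = \<alpha> * codeword0 b 0" using fun_cong[OF e, of 0] c10 by (simp add: e0_def)
  moreover
  let ?j = "num {..<2 * b}"
  have sub2: "{..<2 * b} \<subseteq> {..<?n}" by auto
  have jl: "?j < 2 ^ ?n" using num_less[OF sub2] .
  have wj: "hweight ?n ?j = 2 * b" using setof_num[OF sub2] by (simp add: hweight_setof)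
  have "?j \<noteq> 0"
  proof
    assume "?j = 0" then have "hweight ?n ?j = 0" by (simp add: hweight_def)
    with wj b show False by simp
  qed
  moreover have "2 * b \<noteq> 3" by presburger
  then have "codeword1 b ?j = 0" using c1_supp[of b ?j] wj by auto
  moreover
  moreover have "codeword0 b ?j \<noteq> 0" using c0_nonzero[OF b jl wj] .
  ultimately show False using fun_cong[OF e, of ?j] by (simp add: e0_def)
qed




definition Om :: "complex \<Rightarrow> mat2" where
  "Om e = (\<lambda>a c. if a = c then 0 else (if a then - \<i> * e else - \<i> * cnj e))"

definition gd :: "complex \<Rightarrow> mat2" where
  "gd u = (\<lambda>a c. if a = c then (if a then u else cnj u) else 0)"

definition mono4 :: "mat2 \<Rightarrow> bool" where
  "mono4 A \<longleftrightarrow> ((A False True = 0 \<and> A True False = 0) \<or> (A False False = 0 \<and> A True True = 0))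
      \<and> (\<forall>a c. A a c = 0 \<or> A a c ^ 4 = 1)"

lemma root4_mult: "x = 0 \<or> x ^ 4 = 1 \<Longrightarrow> y = 0 \<or> y ^ 4 = 1 \<Longrightarrow> x * y = 0 \<or> (x * y) ^ 4 = (1::complex)"
  by (auto simp: power_mult_distrib)

lemma mono4_mult:
  assumes A: "mono4 A" and B: "mono4 B" shows "mono4 (m2mult A B)"
proof -
  have rA: "\<forall>a c. A a c = 0 \<or> A a c ^ 4 = 1" and rB: "\<forall>a c. B a c = 0 \<or> B a c ^ 4 = 1"
    using A B unfolding mono4_def by blast+
  have sA: "(A False True = 0 \<and> A True False = 0) \<or> (A False False = 0 \<and> A True True = 0)"
    and sB: "(B False True = 0 \<and> B True False = 0) \<or> (B False False = 0 \<and> B True True = 0)"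
    using A B unfolding mono4_def by blast+
  have e: "m2mult A B a c = A a False * B False c + A a True * B True c" for a c by (simp add: m2mult_def)
  have "\<forall>a c. m2mult A B a c = 0 \<or> m2mult A B a c ^ 4 = 1"
  proof (intro allI)
    fix a c
    have "(m2mult A B a c = A a False * B False c \<and> A a True * B True c = 0) \<or>
          (m2mult A B a c = A a True * B True c \<and> A a False * B False c = 0)"
      using sA sB unfolding e by (cases a; cases c) auto
    moreover have "A a False * B False c = 0 \<or> (A a False * B False c) ^ 4 = 1"
      by (rule root4_mult) (use rA rB in blast)+
    moreover have "A a True * B True c = 0 \<or> (A a True * B True c) ^ 4 = 1"
      by (rule root4_mult) (use rA rB in blast)+
    ultimately show "m2mult A B a c = 0 \<or> m2mult A B a c ^ 4 = 1" by auto
  qed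
  moreover have "(m2mult A B False True = 0 \<and> m2mult A B True False = 0) \<or> (m2mult A B False False = 0 \<and> m2mult A B True True = 0)"
    using sA sB unfolding e by auto
  ultimately show ?thesis unfolding mono4_def by blast
qed

lemma cliff1_mono4: "A \<in> cliff1 \<Longrightarrow> mono4 A"
proof (induction rule: cliff1.induct)
  case one show ?case by (auto simp: mono4_def m2id_def)
next
  case genX show ?case by (auto simp: mono4_def sX_def)
next
  case genZ show ?case by (auto simp: mono4_def sZ_def)
next
  case (mult A B) then show ?case using mono4_mult by blast
qed

lemma sX_cliff1: "sX \<in> cliff1" by (rule cliff1.genX)

lemma conj_Om: "m2mult (m2mult (Om e) sX) (m2adj (Om e)) = Om (e ^ 2)"
  by (rule ext)+ (auto simp: m2mult_def m2adj_def Om_def sX_def power2_eq_square algebra_simps)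

lemma conj_gd: "m2mult (m2mult (gd u) sX) (m2adj (gd u)) = Om (u ^ 2)"
  by (rule ext)+ (auto simp: m2mult_def m2adj_def Om_def gd_def sX_def power2_eq_square algebra_simps)

lemma Om_cliff: "Om e \<in> cliff (Suc k) \<Longrightarrow> e \<noteq> 0 \<Longrightarrow> e ^ (4 * 2 ^ k) = 1"
proof (induction k arbitrary: e)
  case 0
  then have "mono4 (Om e)" using cliff1_mono4 by simp
  then have "Om e True False = 0 \<or> Om e True False ^ 4 = 1" unfolding mono4_def by blast
  moreover have "Om e True False = - \<i> * e" by (simp add: Om_def)
  ultimately have "(- \<i> * e) ^ 4 = 1" using 0 by auto
  then show ?case by (simp add: power_mult_distrib)
next
  case (Suc k)
  then have "m2mult (m2mult (Om e) sX) (m2adj (Om e)) \<in> cliff (Suc k)"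
    using sX_cliff1 by (simp only: cliff.simps(3)) blast
  then have "Om (e ^ 2) \<in> cliff (Suc k)" by (simp only: conj_Om)
  then have "(e ^ 2) ^ (4 * 2 ^ k) = 1" using Suc by simp
  then show ?case by (simp add: power_mult[symmetric] algebra_simps)
qed

lemma gd_cliff:
  assumes "gd u \<in> cliff r" "r \<ge> 1" "u \<noteq> 0"
  shows "\<exists>j. u ^ (2 ^ j) = 1"
proof (cases r)
  case 0 then show ?thesis using assms by simp
next
  case (Suc k)
  show ?thesis
  proof (cases k)
    case 0
    then have "mono4 (gd u)" using assms Suc cliff1_mono4 by simp
    then have "gd u False False = 0 \<or> gd u False False ^ 4 = 1" unfolding mono4_def by blast
    moreover have "gd u False False = cnj u" by (simp add: gd_def)
    ultimately have "cnj u ^ 4 = 1" using assms(3) by auto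
    then have "u ^ 4 = 1" by (metis complex_cnj_one complex_cnj_power complex_cnj_cnj)
    then show ?thesis by (intro exI[of _ 2]) simp
  next
    case (Suc k')
    then have "gd u \<in> cliff (Suc (Suc k'))" using assms(1) \<open>r = Suc k\<close> by simp
    then have "m2mult (m2mult (gd u) sX) (m2adj (gd u)) \<in> cliff (Suc k')"
      using sX_cliff1 by (simp only: cliff.simps(3)) blast
    then have "Om (u ^ 2) \<in> cliff (Suc k')" by (simp only: conj_gd)
    then have "(u ^ 2) ^ (4 * 2 ^ k') = 1" using Om_cliff assms(3) by simp
    moreover have "(2::nat) ^ (k' + 3) = 2 * (4 * 2 ^ k')" by (simp add: power_add)
    ultimately have "u ^ (2 ^ (k' + 3)) = 1" by (simp only: power_mult)
    then show ?thesis by blast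
  qed
qed




definition uu :: "nat \<Rightarrow> complex" where "uu b = cis (pi / real (2 * b))"

lemma uu_pow_dvd:
  assumes b: "b \<ge> 1" and h: "uu b ^ N = 1"
  shows "b dvd N"
proof -
  have "cis (real N * (pi / real (2 * b))) = 1" using h by (simp add: uu_def DeMoivre)
  then have "cos (real N * (pi / real (2 * b))) = 1" by (metis cis.simps(1) one_complex.simps(1))
  then obtain z :: int where z: "real N * (pi / real (2 * b)) = real_of_int z * 2 * pi"
    using cos_one_2pi_int by blast
  then have "real N = real_of_int z * 4 * real b" using b by (simp add: field_simps)
  then have "int N = z * 4 * int b" by (metis of_int_eq_iff of_int_mult of_int_of_nat_eq of_int_numeral)
  then have "int b dvd int N" by (metis dvd_triv_right)
  then show ?thesis by simp
qed

lemma uu_unit: "uu b * cnj (uu b) = 1"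
  using complex_norm_square[of "uu b"] by (simp add: uu_def)

lemma uu_nz: "uu b \<noteq> 0" using uu_unit[of b] by auto

lemma uu_2b: "b \<ge> 1 \<Longrightarrow> uu b ^ (2 * b) = -1"
  by (simp add: uu_def DeMoivre)

lemma gd_SU2: "gd (uu b) \<in> SU2"
  using uu_unit[of b]
  by (auto simp: SU2_def m2mult_def m2adj_def m2id_def m2det_def gd_def mult.commute intro!: ext)

lemma gd_exotic:
  assumes b: "b \<ge> 1" and np: "\<forall>r::nat. b \<noteq> 2 ^ r"
  shows "exotic (gd (uu b))"
  unfolding exotic_def
proof (intro conjI allI impI gd_SU2)
  fix r :: nat assume "r \<ge> 1"
  show "gd (uu b) \<notin> cliff r"
  proof
    assume "gd (uu b) \<in> cliff r"
    then obtain j where "uu b ^ (2 ^ j) = 1" using gd_cliff \<open>r \<ge> 1\<close> uu_nz by blast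
    then have "b dvd 2 ^ j" using uu_pow_dvd b by blast
    then obtain i where "b = 2 ^ i" using divides_primepow_nat[of 2 b j] by auto
    then show False using np by blast
  qed
qed

lemma qapply_tensor_diag:
  assumes diag: "\<And>a c. a \<noteq> c \<Longrightarrow> g a c = 0"
  shows "qapply n (tensor_power n g) v j = (if j < 2 ^ n then (\<Prod>k<n. g (bit j k) (bit j k)) * v j else 0)"
proof (cases "j < 2 ^ n")
  case True
  have z: "tensor_power n g j i = 0" if "i < 2 ^ n" "i \<noteq> j" for i
  proof -
    obtain k where k: "bit i k \<noteq> bit j k" using \<open>i \<noteq> j\<close> bit_eq_iff by blast
    have kn: "k < n" using k that True by (auto simp: less_exp_iff_bits)
    have gk: "g (bit j k) (bit i k) = 0" by (rule diag) (use k in auto)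
    have "(\<Prod>k<n. g (bit j k) (bit i k)) = 0" by (rule prod_zero) (use kn gk in auto)
    then show ?thesis using that True by (simp add: tensor_power_def)
  qed
  have "(\<Sum>i<2 ^ n. tensor_power n g j i * v i) = (\<Sum>i<2 ^ n. if i = j then tensor_power n g j j * v j else 0)"
    by (rule sum.cong) (use z in auto)
  also have "\<dots> = tensor_power n g j j * v j" using True by simp
  finally show ?thesis using True by (simp add: qapply_def tensor_power_def)
qed (simp add: qapply_def)

lemma phase_formula:
  "(\<Prod>k<n. gd u (bit j k) (bit j k)) = u ^ hweight n j * cnj u ^ (n - hweight n j)"
proof -
  have "(\<Prod>k<n. gd u (bit j k) (bit j k)) = (\<Prod>k<n. if bit j k then u else cnj u)"
    by (simp add: gd_def)
  also have "\<dots> = (\<Prod>k\<in>{..<n} \<inter> {k. bit j k}. u) * (\<Prod>k\<in>{..<n} \<inter> - {k. bit j k}. cnj u)"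
    by (rule prod.If_cases) simp
  also have "\<dots> = u ^ card ({..<n} \<inter> {k. bit j k}) * cnj u ^ card ({..<n} \<inter> - {k. bit j k})" by simp
  also have "card ({..<n} \<inter> {k. bit j k}) = hweight n j" by (simp add: hweight_def Int_def)
  also have "{..<n} \<inter> - {k. bit j k} = {..<n} - {k. k < n \<and> bit j k}" by auto
  also have "card ({..<n} - {k. k < n \<and> bit j k}) = n - hweight n j" by (subst card_Diff_subset) (auto simp: hweight_def)
  finally show ?thesis .
qed

lemma transversal:
  assumes b: "b \<ge> 5"
  shows "\<forall>v\<in>span2 (codeword0 b) (codeword1 b).
           qapply (2 * b + 3) (tensor_power (2 * b + 3) (gd (uu b))) v \<in> span2 (codeword0 b) (codeword1 b)"
proof
  let ?n = "2 * b + 3"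
  define u where "u = uu b"
  fix v assume "v \<in> span2 (codeword0 b) (codeword1 b)"
  then obtain \<alpha> \<beta> where v: "v = (\<lambda>i. \<alpha> * codeword0 b i + \<beta> * codeword1 b i)" by (auto simp: span2_def)
  define l0 where "l0 = - (cnj u ^ 3)"
  define l1 where "l1 = - (u ^ 3)"
  have u2b: "u ^ (2 * b) = -1" using uu_2b b unfolding u_def by simp
  have "cnj u ^ (2 * b) = cnj (u ^ (2 * b))" by simp
  also have "\<dots> = -1" unfolding u2b by simp
  finally have cu2b: "cnj u ^ (2 * b) = -1" .
  have ph: "(\<Prod>k<?n. gd u (bit j k) (bit j k)) = u ^ w * cnj u ^ (?n - w)" if "hweight ?n j = w" for j w
    using phase_formula that by simp
  have eqv: "qapply ?n (tensor_power ?n (gd u)) v = (\<lambda>i. (\<alpha> * l0) * codeword0 b i + (\<beta> * l1) * codeword1 b i)"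
  proof (rule ext)
    fix j
    show "qapply ?n (tensor_power ?n (gd u)) v j = (\<alpha> * l0) * codeword0 b j + (\<beta> * l1) * codeword1 b j"
    proof (cases "j < 2 ^ ?n")
      case False
      then have "codeword0 b j = 0" "codeword1 b j = 0" using c0_supp c1_supp by blast+
      then show ?thesis using False by (simp add: qapply_tensor_diag gd_def)
    next
      case True
      let ?w = "hweight ?n j"
      have qa: "qapply ?n (tensor_power ?n (gd u)) v j = u ^ ?w * cnj u ^ (?n - ?w) * v j"
        using True ph by (simp add: qapply_tensor_diag gd_def)
      show ?thesis
      proof (cases "codeword0 b j \<noteq> 0")
        case True
        then have w: "?w = 0 \<or> ?w = 2 * b" using c0_supp by blast
        then have "codeword1 b j = 0" using c1_supp b by fastforce
        moreover have "u ^ ?w * cnj u ^ (?n - ?w) = l0"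
          using w
        proof
          assume "?w = 0"
          then show ?thesis using cu2b by (simp add: power_add l0_def)
        next
          assume "?w = 2 * b"
          then show ?thesis using u2b by (simp add: l0_def)
        qed
        ultimately show ?thesis using qa v by (simp add: algebra_simps)
      next
        case False
        then have c0: "codeword0 b j = 0" by simp
        show ?thesis
        proof (cases "codeword1 b j \<noteq> 0")
          case True
          then have w: "?w = 3 \<or> ?w = 2 * b + 3" using c1_supp by blast
          have "u ^ ?w * cnj u ^ (?n - ?w) = l1"
            using w
          proof
            assume "?w = 3"
            then show ?thesis using cu2b by (simp add: l1_def)
          next
            assume "?w = 2 * b + 3"
            then show ?thesis using u2b by (simp add: power_add l1_def)
          qed
          then show ?thesis using qa v c0 by (simp add: algebra_simps)
        next
          case False
          then show ?thesis using qa v c0 by simp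
        qed
      qed
    qed
  qed
  then show "qapply ?n (tensor_power ?n (gd (uu b))) v \<in> span2 (codeword0 b) (codeword1 b)"
    unfolding span2_def u_def[symmetric] using eqv by blast
qed


theorem mainTheorem6:
  fixes b :: nat
  assumes "b \<ge> 1"
    and "\<forall>r::nat. b \<noteq> 2 ^ r"
    and "\<forall>r::nat. b \<noteq> 3 * 2 ^ r"
  shows "is_code_n2d (2 * b + 3) 3 (codeword0 b) (codeword1 b)
         \<and> perm_invariant (2 * b + 3) (span2 (codeword0 b) (codeword1 b))
         \<and> non_additive (2 * b + 3) (span2 (codeword0 b) (codeword1 b))
         \<and> has_exotic_transversal (2 * b + 3) (span2 (codeword0 b) (codeword1 b))"
proof -
  have "b \<noteq> 1" using assms(2)[rule_format, of 0] by simp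
  moreover have "b \<noteq> 2" using assms(2)[rule_format, of 1] by simp
  moreover have "b \<noteq> 4" using assms(2)[rule_format, of 2] by simp
  moreover have "b \<noteq> 3" using assms(3)[rule_format, of 0] by simp
  ultimately have b5: "b \<ge> 5" using assms(1) by linarith
  have "has_exotic_transversal (2 * b + 3) (span2 (codeword0 b) (codeword1 b))"
    unfolding has_exotic_transversal_def
    using gd_exotic[OF assms(1) assms(2)] transversal[OF b5] by blast
  then show ?thesis using is_code[OF b5] perm_inv[of b] non_add[of b] b5 by simp
qed

end
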